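(* Consider a constrained online convex optimization problem: $\mathcal{F}\subset\mathbb{R}^d$ is a convex set with bounded $\ell_\infty$-diameter $D_\infty=\max_{\boldsymbol{x},\boldsymbol{y}\in\mathcal{F}}\Vert\boldsymbol{x}-\boldsymbol{y}\Vert_\infty$, and $f_1,\dots,f_T$ are convex loss functions with $\Vert\nabla f_t(\boldsymbol{\theta})\Vert_\infty\le G_\infty$ for all $t\in[T]$ and $\boldsymbol{\theta}\in\mathcal{F}$. Let the iterates be generated by AdaSGDMax with step size $\eta_t=\eta D_\infty/(G_\infty\sqrt{t\hat v_t})$ for some $\eta>0$, and assume $\hat v_1>0$. Then the regret $R_T:=\sum_{t=1}^T f_t(\boldsymbol{\theta}_t)-\min_{\boldsymbol{\theta}^*\in\mathcal{F}}\sum_{t=1}^T f_t(\boldsymbol{\theta}^* )$ satisfies $$R_T\le\frac{dD_\infty G_\infty\sqrt{\hat v_T T}}{2\eta}+\frac{dD_\infty G_\infty\eta(2\sqrt{T}-1)}{2\sqrt{\hat v_1}}.$$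
   Context: AdaSGDMax in the online setting: with $\boldsymbol{g}_t=\nabla f_t(\boldsymbol{\theta}_t)$, $v_0=0$, $\hat v_0=0$ and a fixed $\beta_2\in[0,1)$, set $v_t=\beta_2 v_{t-1}+(1-\beta_2)\Vert\boldsymbol{g}_t\Vert_2^2$, $\hat v_t=\max\{\hat v_{t-1},v_t\}$, and $\boldsymbol{\theta}_{t+1}=\Pi_{\mathcal{F}}(\boldsymbol{\theta}_t-\eta_t\boldsymbol{g}_t)$, where $\Pi_{\mathcal{F}}(\boldsymbol{x})=\arg\min_{\boldsymbol{y}\in\mathcal{F}}\Vert\boldsymbol{x}-\boldsymbol{y}\Vert_2$ is Euclidean projection and $\boldsymbol{\theta}_1\in\mathcal{F}$. *)

theory Defs
  imports "HOL-Analysis.Analysis"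
begin

definition linf_diam :: "('a::euclidean_space) set \<Rightarrow> real" where
  "linf_diam F = (SUP x\<in>F. SUP y\<in>F. infnorm (x - y))"

end

theory Submission
  imports Defs
begin

lemma tangent_ineq:
  fixes h :: "'a::euclidean_space \<Rightarrow> real"
  assumes cv: "convex_on F h" and d: "(h has_derivative (\<lambda>d. gx \<bullet> d)) (at x)"
    and x: "x \<in> F" and y: "y \<in> F"
  shows "h x + gx \<bullet> (y - x) \<le> h y"
proof -
  define \<phi> where "\<phi> = (\<lambda>s::real. h (x + s *\<^sub>R (y - x)))"
  have lin: "((\<lambda>s::real. x + s *\<^sub>R (y - x)) has_derivative (\<lambda>s. s *\<^sub>R (y - x))) (at 0)"
    by (auto intro!: derivative_eq_intros)
  have "(\<phi> has_derivative (\<lambda>s. gx \<bullet> (s *\<^sub>R (y - x)))) (at 0)"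
  proof -
    have d': "(h has_derivative (\<lambda>d. gx \<bullet> d)) (at (x + (0::real) *\<^sub>R (y - x)))" using d by simp
    show ?thesis unfolding \<phi>_def using has_derivative_compose[OF lin d'] by (simp add: o_def)
  qed
  hence "(\<phi> has_real_derivative (gx \<bullet> (y - x))) (at 0)"
    by (simp add: has_field_derivative_def mult_commute_abs)
  hence "((\<lambda>s. (\<phi> s - \<phi> 0) / (s - 0)) \<longlongrightarrow> gx \<bullet> (y - x)) (at 0)"
    by (simp only: has_field_derivative_iff)
  hence lim: "((\<lambda>s. (\<phi> s - \<phi> 0) / (s - 0)) \<longlongrightarrow> gx \<bullet> (y - x)) (at_right 0)"
    by (simp only: filterlim_at_split)
  have ev: "\<forall>\<^sub>F s in at_right 0. (\<phi> s - \<phi> 0) / (s - 0) \<le> h y - h x"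
  proof -
    have "\<forall>\<^sub>F s in at_right (0::real). s \<in> {0<..<1}"
      by (rule eventually_at_right_real) simp
    then show ?thesis
    proof eventually_elim
      case (elim s)
      hence elim: "0 < s" "s < 1" by auto
      have eq: "x + s *\<^sub>R (y - x) = (1 - s) *\<^sub>R x + s *\<^sub>R y" by (simp add: algebra_simps)
      have "h ((1 - s) *\<^sub>R x + s *\<^sub>R y) \<le> (1 - s) * h x + s * h y"
        using convex_onD[OF cv, of s x y] elim x y by simp
      hence "\<phi> s - \<phi> 0 \<le> s * (h y - h x)" unfolding \<phi>_def eq by (simp add: algebra_simps)
      thus ?case using elim by (simp add: pos_divide_le_eq mult.commute)
    qed
  qed
  have "gx \<bullet> (y - x) \<le> h y - h x"
    using tendsto_le[OF _ tendsto_const lim ev] by simp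
  thus ?thesis by simp
qed
lemma sum_inv_sqrt:
  assumes "n \<ge> 1"
  shows "(\<Sum>t=1..n. 1 / sqrt (real t)) \<le> 2 * sqrt (real n) - 1"
  using assms
proof (induction n rule: nat_induct_at_least)
  case base
  then show ?case by simp
next
  case (Suc n)
  have a: "sqrt (real n) * sqrt (real n + 1) \<le> (2 * real n + 1) / 2"
  proof -
    have "0 \<le> (sqrt (real n) - sqrt (real n + 1))^2" by simp
    also have "\<dots> = real n + (real n + 1) - 2 * (sqrt (real n) * sqrt (real n + 1))"
      by (simp add: power2_eq_square algebra_simps)
    finally show ?thesis by simp
  qed
  have p: "sqrt (real n + 1) > 0" by simp
  have "1 / sqrt (real (Suc n)) \<le> 2 * sqrt (real (Suc n)) - 2 * sqrt (real n)"
  proof -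
    have "1 \<le> (2 * sqrt (real n + 1) - 2 * sqrt (real n)) * sqrt (real n + 1)"
      using a by (simp add: algebra_simps)
    thus ?thesis using p by (simp add: pos_divide_le_eq add.commute)
  qed
  thus ?case using Suc.IH by simp
qed
lemma alg_e1: fixes G D \<eta> d v :: real and T :: nat assumes "D > 0" "\<eta> > 0"
  shows "G * sqrt (real T * v) / (\<eta> * D) * (d * D\<^sup>2) / 2 = d * D * G * sqrt (v * real T) / (2 * \<eta>)"
  using assms by (simp add: power2_eq_square mult.commute[of "real T"] field_simps)

lemma alg_e3: fixes G D \<eta> d v s :: real assumes "G > 0" "s > 0" "v > 0"
  shows "(d * G\<^sup>2) * (\<eta> * D / (G * (s * v))) / 2 = d * D * G * \<eta> / (2 * v) * (1 / s)"
  using assms by (simp add: power2_eq_square field_simps)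

theorem corollary3p2p1:
  fixes F :: "(real ^ 'd) set"
    and f :: "nat \<Rightarrow> real ^ 'd \<Rightarrow> real"
    and g :: "nat \<Rightarrow> real ^ 'd \<Rightarrow> real ^ 'd"
    and \<theta> :: "nat \<Rightarrow> real ^ 'd"
    and v vhat :: "nat \<Rightarrow> real"
    and T :: nat and \<beta>2 \<eta> G :: real
  assumes F_convex: "convex F" and F_closed: "closed F" and F_bounded: "bounded F"
    and T_pos: "T \<ge> 1"
    and f_convex: "\<And>t. t \<in> {1..T} \<Longrightarrow> convex_on F (f t)"
    and grad: "\<And>t x. t \<in> {1..T} \<Longrightarrow> x \<in> F \<Longrightarrow>
                 (f t has_derivative (\<lambda>h. g t x \<bullet> h)) (at x)"
    and grad_bound: "\<And>t x. t \<in> {1..T} \<Longrightarrow> x \<in> F \<Longrightarrow> infnorm (g t x) \<le> G"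
    and beta2: "0 \<le> \<beta>2" "\<beta>2 < 1"
    and eta_pos: "\<eta> > 0"
    and v0: "v 0 = 0" and vhat0: "vhat 0 = 0"
    and v_rec: "\<And>t. t \<in> {1..T} \<Longrightarrow>
                  v t = \<beta>2 * v (t - 1) + (1 - \<beta>2) * (norm (g t (\<theta> t)))\<^sup>2"
    and vhat_rec: "\<And>t. t \<in> {1..T} \<Longrightarrow> vhat t = max (vhat (t - 1)) (v t)"
    and theta1: "\<theta> 1 \<in> F"
    and theta_rec: "\<And>t. t \<in> {1..T} \<Longrightarrow>
          \<theta> (t + 1) = closest_point F (\<theta> t -
             (\<eta> * linf_diam F / (G * sqrt (real t * vhat t))) *\<^sub>R g t (\<theta> t))"
    and vhat1_pos: "vhat 1 > 0"
  shows "\<forall>\<theta>s\<in>F. (\<Sum>t=1..T. f t (\<theta> t)) - (\<Sum>t=1..T. f t \<theta>s)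
           \<le> real CARD('d) * linf_diam F * G * sqrt (vhat T * real T) / (2 * \<eta>)
             + real CARD('d) * linf_diam F * G * \<eta> * (2 * sqrt (real T) - 1)
               / (2 * sqrt (vhat 1))"
proof
  fix \<theta>s assume ths: "\<theta>s \<in> F"
  define D where "D = linf_diam F"
  define d where "d = real CARD('d)"
  have Fne: "F \<noteq> {}" using theta1 by auto
  have theta_in: "\<theta> t \<in> F" if "1 \<le> t" "t \<le> T + 1" for t
    using that
  proof (induction t rule: nat_induct_at_least)
    case base then show ?case using theta1 by simp
  next
    case (Suc n)
    have "n \<in> {1..T}" using Suc by auto
    then show ?case using theta_rec[of n] closest_point_in_set[OF F_closed Fne] by simp
  qed
  obtain B where B: "\<And>x. x \<in> F \<Longrightarrow> norm x \<le> B"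
    using F_bounded unfolding bounded_iff by auto
  have pair_bd: "infnorm (x - y) \<le> 2 * B" if "x \<in> F" "y \<in> F" for x y
  proof -
    have "infnorm (x - y) \<le> norm (x - y)" by (rule infnorm_le_norm)
    also have "\<dots> \<le> norm x + norm y" by (rule norm_triangle_ineq4)
    also have "\<dots> \<le> 2 * B" using B[OF that(1)] B[OF that(2)] by simp
    finally show ?thesis .
  qed
  have inner_le: "(SUP y\<in>F. infnorm (x - y)) \<le> 2 * B" if "x \<in> F" for x
    using Fne pair_bd[OF that] by (intro cSUP_least) auto
  have diam: "infnorm (x - y) \<le> D" if "x \<in> F" "y \<in> F" for x y
  proof -
    have "infnorm (x - y) \<le> (SUP y\<in>F. infnorm (x - y))"
      using that pair_bd[OF that(1)] by (intro cSUP_upper) (auto intro!: bdd_aboveI2)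
    also have "\<dots> \<le> D" unfolding D_def linf_diam_def
      using that inner_le by (intro cSUP_upper) (auto intro!: bdd_aboveI2)
    finally show ?thesis .
  qed
  have D_nonneg: "0 \<le> D" using diam[OF theta1 theta1] infnorm_pos_le[of "0::real^'d"] by simp
  have d_pos: "0 < d" unfolding d_def by simp
  have sq_bd: "(norm z)\<^sup>2 \<le> d * c\<^sup>2" if "infnorm z \<le> c" for z :: "real ^ 'd" and c
  proof -
    have "norm z \<le> sqrt d * infnorm z" using norm_le_infnorm[of z] unfolding d_def by simp
    also have "\<dots> \<le> sqrt d * c" using that d_pos by (intro mult_left_mono) auto
    finally have "norm z \<le> sqrt d * c" .
    hence "(norm z)\<^sup>2 \<le> (sqrt d * c)\<^sup>2" by (intro power_mono) auto
    also have "\<dots> = d * c\<^sup>2" using d_pos by (simp add: power_mult_distrib)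
    finally show ?thesis .
  qed
  define M where "M = d * D\<^sup>2"
  define \<delta> where "\<delta> t = (norm (\<theta> t - \<theta>s))\<^sup>2" for t
  have \<delta>_bd: "\<delta> t \<le> M" if "1 \<le> t" "t \<le> T + 1" for t
    unfolding \<delta>_def M_def using sq_bd diam theta_in[OF that] ths by blast
  have G_nonneg: "0 \<le> G" using grad_bound[of 1 "\<theta> 1"] T_pos theta1
    by (meson atLeastAtMost_iff infnorm_pos_le le_refl order_trans)
  have gsq: "(norm (g t (\<theta> t)))\<^sup>2 \<le> d * G\<^sup>2" if "t \<in> {1..T}" for t
    using sq_bd grad_bound[OF that theta_in] that by auto
  have vhat_mono: "vhat t \<le> vhat (t + 1)" if "t + 1 \<in> {1..T}" for t
    using vhat_rec[OF that] by simp
  have vhat_ge1: "vhat 1 \<le> vhat t" if "1 \<le> t" "t \<le> T" for t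
    using that
  proof (induction t rule: nat_induct_at_least)
    case base then show ?case by simp
  next
    case (Suc n) then show ?case using vhat_mono[of n] by simp
  qed
  have convex_step: "f t (\<theta> t) - f t \<theta>s \<le> g t (\<theta> t) \<bullet> (\<theta> t - \<theta>s)" if "t \<in> {1..T}" for t
  proof -
    have th: "\<theta> t \<in> F" using theta_in that by auto
    have "f t (\<theta> t) + g t (\<theta> t) \<bullet> (\<theta>s - \<theta> t) \<le> f t \<theta>s"
      by (rule tangent_ineq[OF f_convex[OF that] grad[OF that th] th ths])
    thus ?thesis by (simp add: inner_diff_right)
  qed
  have RHS_nonneg: "0 \<le> real CARD('d) * linf_diam F * G * sqrt (vhat T * real T) / (2 * \<eta>)
             + real CARD('d) * linf_diam F * G * \<eta> * (2 * sqrt (real T) - 1)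
               / (2 * sqrt (vhat 1))"
  proof -
    have "1 \<le> sqrt (real T)" using T_pos by simp
    hence "1 \<le> 2 * sqrt (real T)" by linarith
    moreover have "0 \<le> vhat T" using vhat_ge1[of T] T_pos vhat1_pos by simp
    ultimately show ?thesis using D_nonneg G_nonneg eta_pos vhat1_pos unfolding D_def
      by (intro add_nonneg_nonneg divide_nonneg_nonneg mult_nonneg_nonneg) auto
  qed
  show "(\<Sum>t=1..T. f t (\<theta> t)) - (\<Sum>t=1..T. f t \<theta>s)
           \<le> real CARD('d) * linf_diam F * G * sqrt (vhat T * real T) / (2 * \<eta>)
             + real CARD('d) * linf_diam F * G * \<eta> * (2 * sqrt (real T) - 1)
               / (2 * sqrt (vhat 1))"
  proof (cases "D = 0 \<or> G = 0")
    case True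
    have "g t (\<theta> t) \<bullet> (\<theta> t - \<theta>s) = 0" if "t \<in> {1..T}" for t
    proof -
      have th: "\<theta> t \<in> F" using theta_in that by auto
      show ?thesis
      proof (cases "D = 0")
        case True
        then have "infnorm (\<theta> t - \<theta>s) \<le> 0" using diam[OF th ths] by simp
        then have "\<theta> t - \<theta>s = 0" by (metis infnorm_eq_0 infnorm_pos_le order_antisym)
        then show ?thesis by simp
      next
        case False
        then have "G = 0" using \<open>D = 0 \<or> G = 0\<close> by simp
        then have "infnorm (g t (\<theta> t)) \<le> 0" using grad_bound[OF that th] by simp
        then have "g t (\<theta> t) = 0" by (metis infnorm_eq_0 infnorm_pos_le order_antisym)
        then show ?thesis by simp
      qed
    qed
    then have "(\<Sum>t=1..T. f t (\<theta> t) - f t \<theta>s) \<le> 0"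
      using convex_step by (intro sum_nonpos) fastforce
    then show ?thesis using RHS_nonneg by (simp add: sum_subtractf)
  next
    case False
    then have Dp: "D > 0" and Gp: "G > 0" using D_nonneg G_nonneg by auto
    define b where "b t = G * sqrt (real t * vhat t) / (\<eta> * D)" for t
    have vpos: "vhat t > 0" if "t \<in> {1..T}" for t using vhat_ge1[of t] that vhat1_pos by auto
    have bpos: "b t > 0" if "t \<in> {1..T}" for t
      using vpos[OF that] that Gp Dp eta_pos unfolding b_def by auto
    have step_eq: "\<eta> * D / (G * sqrt (real t * vhat t)) = 1 / b t" for t
      unfolding b_def by simp
    have b_mono: "b t \<le> b (t + 1)" if "1 \<le> t" "t + 1 \<le> T" for t
    proof -
      have "vhat t \<le> vhat (t + 1)" using vhat_mono that by simp
      moreover have "0 \<le> vhat t" using vpos[of t] that by simp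
      ultimately have "real t * vhat t \<le> real (t + 1) * vhat (t + 1)"
        by (intro mult_mono) auto
      hence "sqrt (real t * vhat t) \<le> sqrt (real (t + 1) * vhat (t + 1))" by simp
      thus ?thesis unfolding b_def using Gp Dp eta_pos
        by (intro divide_right_mono mult_left_mono) auto
    qed
    have step: "g t (\<theta> t) \<bullet> (\<theta> t - \<theta>s) \<le> b t * (\<delta> t - \<delta> (t + 1)) / 2 + (norm (g t (\<theta> t)))\<^sup>2 / (2 * b t)"
      if t: "t \<in> {1..T}" for t
    proof -
      define a where "a = 1 / b t"
      define u where "u = \<theta> t - \<theta>s"
      define gg where "gg = g t (\<theta> t)"
      have bp: "b t > 0" using bpos[OF t] .
      have ab: "a * b t = 1" unfolding a_def using bp by simp
      have "\<theta> (t + 1) = closest_point F (\<theta> t - a *\<^sub>R gg)"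
        using theta_rec[OF t] step_eq[of t] unfolding a_def D_def gg_def by simp
      hence "dist (\<theta> (t + 1)) \<theta>s \<le> dist (\<theta> t - a *\<^sub>R gg) \<theta>s"
        using closest_point_lipschitz[OF F_convex F_closed Fne, of "\<theta> t - a *\<^sub>R gg" \<theta>s]
          closest_point_self[OF ths] by simp
      hence "norm (\<theta> (t + 1) - \<theta>s) \<le> norm (u - a *\<^sub>R gg)"
        unfolding u_def dist_norm by (simp add: algebra_simps)
      hence "\<delta> (t + 1) \<le> (norm (u - a *\<^sub>R gg))\<^sup>2"
        unfolding \<delta>_def by (intro power_mono) auto
      also have "\<dots> = \<delta> t - 2 * a * (gg \<bullet> u) + a\<^sup>2 * (norm gg)\<^sup>2"
        unfolding \<delta>_def u_def power2_norm_eq_inner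
        by (simp add: inner_diff_left inner_diff_right inner_commute algebra_simps power2_eq_square)
      finally have i1: "\<delta> (t + 1) \<le> \<delta> t - 2 * a * (gg \<bullet> u) + a\<^sup>2 * (norm gg)\<^sup>2" .
      have "b t * \<delta> (t + 1) \<le> b t * (\<delta> t - 2 * a * (gg \<bullet> u) + a\<^sup>2 * (norm gg)\<^sup>2)"
        using i1 bp by (intro mult_left_mono) auto
      also have "\<dots> = b t * \<delta> t - 2 * (a * b t) * (gg \<bullet> u) + a * (a * b t) * (norm gg)\<^sup>2"
        by (simp add: algebra_simps power2_eq_square)
      also have "\<dots> = b t * \<delta> t - 2 * (gg \<bullet> u) + a * (norm gg)\<^sup>2"
        using ab by simp
      finally have "b t * \<delta> (t + 1) \<le> b t * \<delta> t - 2 * (gg \<bullet> u) + a * (norm gg)\<^sup>2" .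
      moreover have "a * (norm gg)\<^sup>2 = (norm gg)\<^sup>2 / b t" unfolding a_def by simp
      ultimately show ?thesis unfolding gg_def u_def using bp
        by (simp add: field_simps)
    qed
    have tele: "(\<Sum>t=1..n. b t * (\<delta> t - \<delta> (t + 1)) / 2) \<le> b n * M / 2 - b n * \<delta> (n + 1) / 2"
      if "1 \<le> n" "n \<le> T" for n
      using that
    proof (induction n rule: nat_induct_at_least)
      case base
      have "\<delta> 1 \<le> M" using \<delta>_bd[of 1] by simp
      moreover have "b 1 > 0" using bpos[of 1] T_pos by simp
      ultimately show ?case by (simp add: field_simps mult_left_mono)
    next
      case (Suc n)
      have IH: "(\<Sum>t=1..n. b t * (\<delta> t - \<delta> (t + 1)) / 2) \<le> b n * M / 2 - b n * \<delta> (n + 1) / 2"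
        using Suc by simp
      have "b n * (M - \<delta> (n + 1)) \<le> b (n + 1) * (M - \<delta> (n + 1))"
        using b_mono[of n] Suc \<delta>_bd[of "n + 1"] by (intro mult_right_mono) auto
      hence m: "b n * M - b n * \<delta> (n + 1) \<le> b (n + 1) * M - b (n + 1) * \<delta> (n + 1)"
        by (simp add: algebra_simps)
      have sp: "(\<Sum>t=1..n + 1. b t * (\<delta> t - \<delta> (t + 1)) / 2)
          = (\<Sum>t=1..n. b t * (\<delta> t - \<delta> (t + 1)) / 2) + b (n + 1) * (\<delta> (n + 1) - \<delta> (n + 1 + 1)) / 2"
        by simp
      have e: "b (n + 1) * (\<delta> (n + 1) - \<delta> (n + 1 + 1)) / 2 = b (n + 1) * \<delta> (n + 1) / 2 - b (n + 1) * \<delta> (n + 1 + 1) / 2"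
        by (simp only: right_diff_distrib diff_divide_distrib)
      show ?case unfolding Suc_eq_plus1 using sp IH m e by linarith
    qed
    have sum1: "(\<Sum>t=1..T. b t * (\<delta> t - \<delta> (t + 1)) / 2) \<le> b T * M / 2"
    proof -
      have "0 \<le> b T * \<delta> (T + 1) / 2" using bpos[of T] T_pos unfolding \<delta>_def by simp
      thus ?thesis using tele[of T] T_pos by simp
    qed
    define K where "K = d * D * G * \<eta> / (2 * sqrt (vhat 1))"
    have term2: "(norm (g t (\<theta> t)))\<^sup>2 / (2 * b t) \<le> K * (1 / sqrt (real t))" if t: "t \<in> {1..T}" for t
    proof -
      have "1 / b t = \<eta> * D / (G * (sqrt (real t) * sqrt (vhat t)))"
        using step_eq[of t] by (simp add: real_sqrt_mult)
      also have "\<dots> \<le> \<eta> * D / (G * (sqrt (real t) * sqrt (vhat 1)))"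
        using vhat_ge1[of t] t vhat1_pos Gp Dp eta_pos
        by (intro divide_left_mono mult_left_mono mult_pos_pos) auto
      finally have ib: "1 / b t \<le> \<eta> * D / (G * (sqrt (real t) * sqrt (vhat 1)))" .
      have "(norm (g t (\<theta> t)))\<^sup>2 / (2 * b t) = (norm (g t (\<theta> t)))\<^sup>2 * (1 / b t) / 2" by simp
      also have "\<dots> \<le> (d * G\<^sup>2) * (\<eta> * D / (G * (sqrt (real t) * sqrt (vhat 1)))) / 2"
        using gsq[OF t] ib bpos[OF t] d_pos
        by (intro divide_right_mono mult_mono) auto
      also have "\<dots> = K * (1 / sqrt (real t))"
        unfolding K_def using Gp vhat1_pos t by (intro alg_e3) auto
      finally show ?thesis .
    qed
    have "(\<Sum>t=1..T. f t (\<theta> t)) - (\<Sum>t=1..T. f t \<theta>s) = (\<Sum>t=1..T. f t (\<theta> t) - f t \<theta>s)"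
      by (simp add: sum_subtractf)
    also have "\<dots> \<le> (\<Sum>t=1..T. b t * (\<delta> t - \<delta> (t + 1)) / 2 + (norm (g t (\<theta> t)))\<^sup>2 / (2 * b t))"
      using convex_step step by (intro sum_mono) (meson order_trans)
    also have "\<dots> = (\<Sum>t=1..T. b t * (\<delta> t - \<delta> (t + 1)) / 2) + (\<Sum>t=1..T. (norm (g t (\<theta> t)))\<^sup>2 / (2 * b t))"
      by (simp add: sum.distrib)
    also have "\<dots> \<le> b T * M / 2 + (\<Sum>t=1..T. K * (1 / sqrt (real t)))"
      using sum1 term2 by (intro add_mono sum_mono) auto
    also have "\<dots> = b T * M / 2 + K * (\<Sum>t=1..T. 1 / sqrt (real t))"
      by (simp add: sum_distrib_left)
    also have "\<dots> \<le> b T * M / 2 + K * (2 * sqrt (real T) - 1)"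
      using sum_inv_sqrt[OF T_pos] Gp Dp eta_pos d_pos vhat1_pos unfolding K_def
      by (intro add_left_mono mult_left_mono) auto
    also have "\<dots> = real CARD('d) * linf_diam F * G * sqrt (vhat T * real T) / (2 * \<eta>)
             + real CARD('d) * linf_diam F * G * \<eta> * (2 * sqrt (real T) - 1)
               / (2 * sqrt (vhat 1))"
    proof -
      have e1: "b T * M / 2 = d * D * G * sqrt (vhat T * real T) / (2 * \<eta>)"
        unfolding b_def M_def using Dp eta_pos by (rule alg_e1)
      have e2: "K * (2 * sqrt (real T) - 1) = d * D * G * \<eta> * (2 * sqrt (real T) - 1) / (2 * sqrt (vhat 1))"
        unfolding K_def by simp
      show ?thesis unfolding e1 e2 d_def D_def ..
    qed
    finally show ?thesis .
  qed
qed

end
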